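(* Let $(X,\rho,\mu)$ be a $K$-doubling metric measure space, $(M,d)$ a complete metric space, $C\subseteq X$ a nonempty closed set and $f\colon C\to M$ an arbitrary function. Then there exists $\tilde f\colon X\to M$ with $\tilde f|_C=f$ and $A_f\subseteq A_{\tilde f}$.
   Context: A $K$-doubling metric measure space ($K>0$) is a triple $(X,\rho,\mu)$ where $(X,\rho)$ is a complete separable metric space and $\mu$ is a Borel-regular outer measure on $X$ with $0<\mu(B_{2r}(x))\le K\mu(B_r(x))<+\infty$ for all $x\in X$, $r>0$. For $g\colon A\to M$, $\operatorname{Lip} g(x)=\limsup_{y\in A,y\to x}d(g(y),g(x))/\rho(y,x)$ and $A_g$ is the set of accumulation points $x\in A$ of $A$ with $\operatorname{Lip} g(x)<+\infty$. *)

theory Defs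
  imports "HOL-Analysis.Analysis"
begin

definition outer_measure :: "('a set \<Rightarrow> ennreal) \<Rightarrow> bool" where
  "outer_measure \<mu> \<longleftrightarrow> \<mu> {} = 0 \<and> (\<forall>A B. A \<subseteq> B \<longrightarrow> \<mu> A \<le> \<mu> B)
     \<and> (\<forall>A :: nat \<Rightarrow> 'a set. \<mu> (\<Union>n. A n) \<le> (\<Sum>n. \<mu> (A n)))"

definition caratheodory_measurable :: "('a set \<Rightarrow> ennreal) \<Rightarrow> 'a set \<Rightarrow> bool" where
  "caratheodory_measurable \<mu> E \<longleftrightarrow> (\<forall>T. \<mu> T = \<mu> (T \<inter> E) + \<mu> (T - E))"

definition borel_regular_outer_measure :: "('a::topological_space set \<Rightarrow> ennreal) \<Rightarrow> bool" where
  "borel_regular_outer_measure \<mu> \<longleftrightarrow> outer_measure \<mu>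
     \<and> (\<forall>B \<in> sets borel. caratheodory_measurable \<mu> B)
     \<and> (\<forall>A. \<exists>B \<in> sets borel. A \<subseteq> B \<and> \<mu> B = \<mu> A)"

text \<open>K-doubling metric measure space; X is the whole type (complete separable metric space,
  i.e. class polish_space). Balls are open balls.\<close>
definition doubling_mms :: "real \<Rightarrow> ('a::polish_space set \<Rightarrow> ennreal) \<Rightarrow> bool" where
  "doubling_mms K \<mu> \<longleftrightarrow> K > 0 \<and> borel_regular_outer_measure \<mu>
     \<and> (\<forall>x r. r > 0 \<longrightarrow> 0 < \<mu> (ball x (2 * r)) \<and> \<mu> (ball x (2 * r)) \<le> ennreal K * \<mu> (ball x r)
                 \<and> \<mu> (ball x r) < \<infinity>)"

definition pLip :: "'a::metric_space set \<Rightarrow> ('a \<Rightarrow> 'b::metric_space) \<Rightarrow> 'a \<Rightarrow> ereal" where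
  "pLip A g x = Limsup (at x within A) (\<lambda>y. ereal (dist (g y) (g x) / dist y x))"

definition A_set :: "'a::metric_space set \<Rightarrow> ('a \<Rightarrow> 'b::metric_space) \<Rightarrow> 'a set" where
  "A_set A g = {x \<in> A. x islimpt A \<and> pLip A g x < \<infinity>}"

end

theory Submission
  imports Defs
begin

lemma near_point:
  fixes C :: "'a::metric_space set"
  assumes "C \<noteq> {}" "closed C" "y \<notin> C"
  shows "\<exists>c\<in>C. dist y c < 2 * infdist y C"
proof -
  have pos: "infdist y C > 0"
    using assms in_closed_iff_infdist_zero infdist_nonneg
    by (metis order_less_le)
  then have "(INF a\<in>C. dist y a) < 2 * infdist y C"
    using infdist_notempty[OF assms(1)] by simp
  then show ?thesis
    by (subst (asm) cINF_less_iff) (auto intro: bdd_belowI2[where m=0] simp: assms(1))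
qed

theorem proposition2p10:
  fixes K :: real and \<mu> :: "'a::polish_space set \<Rightarrow> ennreal"
    and C :: "'a set" and f :: "'a \<Rightarrow> 'b::complete_space"
  assumes "doubling_mms K \<mu>"
    and "C \<noteq> {}" and "closed C"
  shows "\<exists>g :: 'a \<Rightarrow> 'b. (\<forall>x\<in>C. g x = f x) \<and> A_set C f \<subseteq> A_set UNIV g"
proof -
  define c where "c y = (if y \<in> C then y else SOME c. c \<in> C \<and> dist y c < 2 * infdist y C)" for y
  have cC: "c y \<in> C" and cd: "dist y (c y) \<le> 2 * infdist y C" for y
  proof -
    have "c y \<in> C \<and> dist y (c y) \<le> 2 * infdist y C"
    proof (cases "y \<in> C")
      case True then show ?thesis by (simp add: c_def)
    next
      case False
      have ex: "\<exists>c. c \<in> C \<and> dist y c < 2 * infdist y C"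
        using near_point[OF assms(2,3) False] by blast
      have "c y \<in> C \<and> dist y (c y) < 2 * infdist y C"
        unfolding c_def using False someI_ex[OF ex] by simp
      then show ?thesis by simp
    qed
    then show "c y \<in> C" "dist y (c y) \<le> 2 * infdist y C" by auto
  qed
  define g where "g y = f (c y)" for y
  have gC: "\<forall>x\<in>C. g x = f x" by (simp add: g_def c_def)
  have "A_set C f \<subseteq> A_set UNIV g"
  proof
    fix x assume "x \<in> A_set C f"
    then have xC: "x \<in> C" and lp: "x islimpt C" and fin: "pLip C f x < \<infinity>"
      by (auto simp: A_set_def)
    obtain L where L: "pLip C f x < ereal L"
      using fin by (cases "pLip C f x") (auto, meson gt_ex)
    have "eventually (\<lambda>y. ereal (dist (f y) (f x) / dist y x) < ereal L) (at x within C)"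
      using Limsup_lessD[OF L[unfolded pLip_def]] .
    then obtain d where d: "d > 0" and dH: "\<And>y. y \<in> C \<Longrightarrow> 0 < dist y x \<Longrightarrow> dist y x < d \<Longrightarrow>
        dist (f y) (f x) / dist y x < L"
      unfolding eventually_at by auto
    define L' where "L' = 3 * max L 0"
    have "eventually (\<lambda>y. ereal (dist (g y) (g x) / dist y x) \<le> ereal L') (at x)"
      unfolding eventually_at
    proof (intro exI[of _ "d/3"] conjI ballI impI)
      show "d/3 > 0" using d by simp
      fix y assume "y \<in> UNIV" and y0: "y \<noteq> x \<and> dist y x < d / 3"
      then have y: "0 < dist y x \<and> dist y x < d / 3" by simp
      have gx: "g x = f x" using gC xC by simp
      have idist: "infdist y C \<le> dist y x" using infdist_le[OF xC] .
      have cdx: "dist (c y) x \<le> 3 * dist y x"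
        using dist_triangle[of "c y" x y] cd[of y] idist by (simp add: dist_commute)
      show "ereal (dist (g y) (g x) / dist y x) \<le> ereal L'"
      proof (cases "c y = x")
        case True then show ?thesis using xC by (simp add: g_def c_def L'_def)
      next
        case False
        then have "dist (f (c y)) (f x) / dist (c y) x < L"
          using dH[OF cC] cdx y by simp
        then have "dist (f (c y)) (f x) \<le> max L 0 * dist (c y) x"
          using False by (simp add: divide_less_eq) (smt (verit) mult_right_mono zero_le_dist)
        also have "\<dots> \<le> max L 0 * (3 * dist y x)"
          using cdx by (intro mult_left_mono) auto
        finally have "dist (g y) (g x) \<le> L' * dist y x"
          using xC by (simp add: g_def c_def L'_def mult_ac)
        then show ?thesis using y by (simp add: divide_le_eq)
      qed
    qed
    then have "pLip UNIV g x \<le> ereal L'"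
      unfolding pLip_def by (intro Limsup_bounded) simp
    then have "pLip UNIV g x < \<infinity>" using le_less_trans[of _ "ereal L'" \<infinity>] by simp
    moreover have "x islimpt UNIV" using lp islimpt_subset by blast
    ultimately show "x \<in> A_set UNIV g" by (simp add: A_set_def)
  qed
  with gC show ?thesis by blast
qed

end
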